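(* Let $\Sigma=(0,\infty]$, let $a,b\in\mathbb{N}$ with $a,b>1$, and let $c\in\mathbb{R}$ with $c>0$. Fix $z\in\Sigma^{\infty}$ with $l(z)=\infty$ and $z_k\neq\infty$ for all $k\in\omega_b$ with $k\geq 2$. Let $$\Sigma_{b,c}^{\infty}:=\{y\in\Sigma^{\infty}: 2\leq l(y),\ y_1=c,\ y_k=\infty \text{ for all } k\notin\omega_b \text{ with } 2\leq k\leq l(y)\}.$$ Define $\Theta_{a,b}^{z}:\Sigma_{b,c}^{\infty}\to\Sigma_{b,c}^{\infty}$ by $\Theta_{a,b}^{z}(x)=x_{\Theta_{a,b}^{z}}$, where $$(x_{\Theta_{a,b}^{z}})_k:=\begin{cases} c & \text{if } k=1,\\ \infty & \text{if } k\notin\omega_b \text{ and } 2\leq k\leq l(x)+1,\\ a\cdot x_{k/b}+z_k & \text{if } k\in\omega_b \text{ and } k/b\leq l(x).\end{cases}$$ Then $\Theta_{a,b}^{z}$ has a unique fixed point $v\in\Sigma_{b,c}^{\infty}$, and this fixed point satisfies $l(v)=\infty$.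
   Context: $\mathbb{N}$ denotes the set of positive integers. For an alphabet (nonempty set) $\Sigma$, $\Sigma^{\infty}$ denotes the set of all nonempty finite and infinite sequences (words) over $\Sigma$; for $x\in\Sigma^\infty$, $l(x)\in[1,\infty]$ is its length and $x_k$ its $k$-th letter ($1\le k\le l(x)$). For $b\in\mathbb{N}$, $\omega_b=\{b^k:k\in\mathbb{N}\}$. Arithmetic on $(0,\infty]$ uses the usual conventions ($a\cdot\infty+t=\infty$). *)

theory Defs
  imports "HOL-Library.Extended_Real"
begin

text \<open>Words over \<Sigma> = (0,\<infinity>] are pairs (L, f): L :: enat is the length (L \<ge> 1),
  f k is the k-th letter for 1 \<le> k \<le> L; outside that range f is padded with 0
  (so that equality of pairs coincides with equality of words).\<close>

definition words :: "(enat \<times> (nat \<Rightarrow> ereal)) set" where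
  "words = {(L, f). L \<ge> 1 \<and> (\<forall>k. 1 \<le> k \<and> enat k \<le> L \<longrightarrow> f k > 0)
                   \<and> (\<forall>k. \<not> (1 \<le> k \<and> enat k \<le> L) \<longrightarrow> f k = 0)}"

definition omega :: "nat \<Rightarrow> nat set" where
  "omega b = {b ^ k | k. k \<ge> 1}"

definition Sigma_bc :: "nat \<Rightarrow> real \<Rightarrow> (enat \<times> (nat \<Rightarrow> ereal)) set" where
  "Sigma_bc b c = {(L, f) \<in> words. 2 \<le> L \<and> f 1 = ereal c \<and>
      (\<forall>k. k \<notin> omega b \<and> 2 \<le> k \<and> enat k \<le> L \<longrightarrow> f k = \<infinity>)}"

definition Theta_dom :: "nat \<Rightarrow> enat \<Rightarrow> nat set" where
  "Theta_dom b L = {1} \<union> {k. k \<notin> omega b \<and> 2 \<le> k \<and> enat k \<le> L + 1}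
                    \<union> {k. k \<in> omega b \<and> enat (k div b) \<le> L}"

text \<open>Length of x_\<Theta>: the longest initial segment {1..n} on which x_\<Theta> is defined.\<close>
definition Theta_len :: "nat \<Rightarrow> enat \<Rightarrow> enat" where
  "Theta_len b L = Sup {enat n | n. \<forall>k. 1 \<le> k \<and> k \<le> n \<longrightarrow> k \<in> Theta_dom b L}"

definition Theta :: "nat \<Rightarrow> nat \<Rightarrow> real \<Rightarrow> (nat \<Rightarrow> ereal)
                      \<Rightarrow> enat \<times> (nat \<Rightarrow> ereal) \<Rightarrow> enat \<times> (nat \<Rightarrow> ereal)" where
  "Theta a b c z x =
     (let L = Theta_len b (fst x) in
      (L, \<lambda>k. if 1 \<le> k \<and> enat k \<le> L then
                 (if k = 1 then ereal c
                  else if k \<notin> omega b then \<infinity>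
                  else ereal (real a) * snd x (k div b) + z k)
               else 0))"

end

theory Submission
  imports Defs
begin

function F :: "nat \<Rightarrow> nat \<Rightarrow> real \<Rightarrow> (nat\<Rightarrow>ereal) \<Rightarrow> nat \<Rightarrow> ereal" where
 "F a b c z k = (if k = 0 then 0 else if k = 1 then ereal c else if k \<notin> omega b then \<infinity>
    else if b \<le> 1 then 0 else ereal (real a) * F a b c z (k div b) + z k)"
  by pat_completeness auto
termination
  by (relation "measure (\<lambda>(a,b,c,z,k). k)") auto

declare F.simps[simp del]

lemma F0[simp]: "F a b c z 0 = 0" by (subst F.simps) simp
lemma F1[simp]: "F a b c z 1 = ereal c" by (subst F.simps) simp
lemma F1'[simp]: "F a b c z (Suc 0) = ereal c" by (subst F.simps) simp
lemma Fno[simp]: "k \<ge> 2 \<Longrightarrow> k \<notin> omega b \<Longrightarrow> F a b c z k = \<infinity>"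
  by (subst F.simps) (auto simp: omega_def)
lemma Fom: "b > 1 \<Longrightarrow> k \<ge> 2 \<Longrightarrow> k \<in> omega b \<Longrightarrow> F a b c z k = ereal (real a) * F a b c z (k div b) + z k"
  by (subst F.simps) auto

lemma omega_ge: "b > 1 \<Longrightarrow> k \<in> omega b \<Longrightarrow> k \<ge> b \<and> k div b \<ge> 1"
proof -
  assume b: "b > 1" and k: "k \<in> omega b"
  then obtain j where j: "k = b^j" "j \<ge> 1" by (auto simp: omega_def)
  then obtain i where "j = Suc i" by (cases j) auto
  hence "k = b * b^i" using j by simp
  moreover have "b^i \<ge> 1" using b by simp
  ultimately show ?thesis using b by simp
qed

lemma omega_pos: "b > 1 \<Longrightarrow> k \<in> omega b \<Longrightarrow> k \<ge> 2"
  using omega_ge by fastforce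

lemma Sup_all: "(\<And>n. enat n \<in> S) \<Longrightarrow> Sup S = (\<infinity>::enat)"
proof (rule ccontr)
  assume h: "\<And>n. enat n \<in> S" "Sup S \<noteq> \<infinity>"
  then obtain m where m: "Sup S = enat m" by (cases "Sup S") auto
  have "enat (Suc m) \<le> Sup S" using h(1) by (rule Sup_upper)
  thus False using m by simp
qed

lemma len_inf: "Theta_len b \<infinity> = \<infinity>"
  unfolding Theta_len_def
  by (rule Sup_all) (auto simp: Theta_dom_def)

lemma len_fin:
  assumes "b > 1" "m \<ge> 1"
  shows "enat (Suc m) \<le> Theta_len b (enat m)"
proof -
  have "\<forall>k. 1 \<le> k \<and> k \<le> Suc m \<longrightarrow> k \<in> Theta_dom b (enat m)"
  proof (intro allI impI)
  fix k assume k: "1 \<le> k \<and> k \<le> Suc m"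
  show "k \<in> Theta_dom b (enat m)"
  proof (cases "k = 1")
    case False
    have "k div b \<le> k div 2" using assms by (simp add: div_le_mono2)
    also have "\<dots> \<le> m" using k assms by linarith
    finally show ?thesis using k False
      by (auto simp: Theta_dom_def one_enat_def)
  qed (simp add: Theta_dom_def)
  qed
  thus ?thesis unfolding Theta_len_def by (intro Sup_upper) blast
qed

lemma F_pos:
  assumes "b > 1" "c > 0" "(\<infinity>, z) \<in> words"
  shows "k \<ge> 1 \<Longrightarrow> F a b c z k > 0"
proof (induction k rule: less_induct)
  case (less k)
  have zp: "z k > 0" using assms(3) less.prems by (auto simp: words_def)
  show ?case
  proof (cases "k = 1 \<or> k \<notin> omega b")
    case True
    hence "k = 1 \<or> k \<ge> 2" using less.prems by auto
    thus ?thesis using True assms(2) by auto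
  next
    case False
    hence om: "k \<in> omega b" "k \<noteq> 1" by auto
    have d: "k div b \<ge> 1" using omega_ge[OF assms(1) om(1)] by simp
    have "k div b < k" using assms(1) less.prems by simp
    hence ih: "F a b c z (k div b) > 0" using less.IH d by blast
    have "0 \<le> ereal (real a) * F a b c z (k div b)"
      using ih by (simp add: ereal_zero_le_0_iff less_imp_le)
    hence "ereal (real a) * F a b c z (k div b) + z k > 0"
      using zp by (metis add_nonneg_pos)
    thus ?thesis using om less.prems assms(1) Fom omega_pos by simp
  qed
qed

theorem theorem4:
  fixes a b :: nat and c :: real and z :: "nat \<Rightarrow> ereal"
  assumes "a > 1" and "b > 1" and "c > 0"
    and "(\<infinity>, z) \<in> words"
    and "\<And>k. k \<in> omega b \<Longrightarrow> k \<ge> 2 \<Longrightarrow> z k \<noteq> \<infinity>"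
  shows "(\<exists>!v. v \<in> Sigma_bc b c \<and> Theta a b c z v = v) \<and>
         (\<forall>v. v \<in> Sigma_bc b c \<and> Theta a b c z v = v \<longrightarrow> fst v = \<infinity>)"
proof -
  have inf: "fst v = \<infinity>" if "v \<in> Sigma_bc b c" "Theta a b c z v = v" for v
  proof (rule ccontr)
    assume "fst v \<noteq> \<infinity>"
    then obtain m where m: "fst v = enat m" by (cases "fst v") auto
    have "fst v \<ge> 1" using that(1) by (auto simp: Sigma_bc_def words_def)
    hence m1: "m \<ge> 1" using m by (simp add: one_enat_def)
    have "fst (Theta a b c z v) = Theta_len b (fst v)" by (simp add: Theta_def Let_def)
    hence "Theta_len b (enat m) = enat m" using that(2) m by simp
    thus False using len_fin[OF assms(2) m1] by simp
  qed
  have eqn: "snd v k = (if k = 0 then 0 else if k = 1 then ereal c else if k \<notin> omega b then \<infinity>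
      else ereal (real a) * snd v (k div b) + z k)"
    if "v \<in> Sigma_bc b c" "Theta a b c z v = v" for v k
  proof -
    have f: "fst v = \<infinity>" using inf that by blast
    have "snd v k = snd (Theta a b c z v) k" using that(2) by simp
    also have "\<dots> = (if 1 \<le> k then
                 (if k = 1 then ereal c
                  else if k \<notin> omega b then \<infinity>
                  else ereal (real a) * snd v (k div b) + z k)
               else 0)" by (simp add: Theta_def Let_def f len_inf)
    finally show ?thesis by auto
  qed
  define v where "v = ((\<infinity>::enat), F a b c z)"
  have vS: "v \<in> Sigma_bc b c"
    using F_pos[OF assms(2,3,4)] unfolding v_def Sigma_bc_def words_def
    by (auto simp: not_less_eq_eq)
  have vT: "Theta a b c z v = v"
    unfolding v_def Theta_def Let_def using assms(2)
    by (auto simp: len_inf Fom omega_pos not_less_eq_eq intro!: ext)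
  have uniq: "w = v" if "w \<in> Sigma_bc b c" "Theta a b c z w = w" for w
  proof -
    have "snd w k = F a b c z k" for k
    proof (induction k rule: less_induct)
      case (less k)
      show ?case
      proof (cases "k \<ge> 2 \<and> k \<in> omega b")
        case True
        have "k div b < k" using True assms(2) by simp
        thus ?thesis using less.IH eqn[OF that, of k] True assms(2)
          by (auto simp: Fom)
      next
        case False
        thus ?thesis using eqn[OF that, of k] omega_pos[OF assms(2)]
          by (cases "k = 0 \<or> k = 1") (auto simp: not_less_eq_eq)
      qed
    qed
    thus ?thesis using inf[OF that] unfolding v_def by (cases w) auto
  qed
  have "\<exists>!v. v \<in> Sigma_bc b c \<and> Theta a b c z v = v"
  proof (rule ex1I[of _ v])
    show "v \<in> Sigma_bc b c \<and> Theta a b c z v = v" using vS vT by simp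
  next
    fix w assume "w \<in> Sigma_bc b c \<and> Theta a b c z w = w"
    thus "w = v" using uniq by simp
  qed
  moreover have "\<forall>v. v \<in> Sigma_bc b c \<and> Theta a b c z v = v \<longrightarrow> fst v = \<infinity>"
    using inf by simp
  ultimately show ?thesis by (rule conjI)
qed

end
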